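(* Let $k\ge 0$ be an integer and let $G$ be a graph with $m$ edges, where $m\ge\max\{\tfrac{1}{2}k^2+6k+3,\,7k+25\}$. If $q(G)\ge m-k+1$, then $G$ contains $K_{1,m-k}$ as a subgraph.
   Context: All graphs are finite, simple and undirected. $q(G)$ denotes the signless Laplacian spectral radius of $G$, i.e. the largest eigenvalue of $Q(G)=D(G)+A(G)$, where $A(G)$ is the adjacency matrix and $D(G)$ the diagonal matrix of vertex degrees. $K_{1,t}$ denotes the star with $t$ edges (on $t+1$ vertices). *)

theory Defs
  imports "HOL-Analysis.Analysis"
begin

definition simple_graph :: "('n::finite \<Rightarrow> 'n \<Rightarrow> bool) \<Rightarrow> bool" where
  "simple_graph E \<longleftrightarrow> (\<forall>u v. E u v \<longrightarrow> E v u) \<and> (\<forall>u. \<not> E u u)"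

definition edges :: "('n::finite \<Rightarrow> 'n \<Rightarrow> bool) \<Rightarrow> 'n set set" where
  "edges E = {{u, v} | u v. E u v}"

definition degree :: "('n::finite \<Rightarrow> 'n \<Rightarrow> bool) \<Rightarrow> 'n \<Rightarrow> nat" where
  "degree E u = card {v. E u v}"

definition adj_matrix :: "('n::finite \<Rightarrow> 'n \<Rightarrow> bool) \<Rightarrow> real^'n^'n" where
  "adj_matrix E = (\<chi> i j. if E i j then 1 else 0)"

definition deg_matrix :: "('n::finite \<Rightarrow> 'n \<Rightarrow> bool) \<Rightarrow> real^'n^'n" where
  "deg_matrix E = (\<chi> i j. if i = j then real (degree E i) else 0)"

definition signless_laplacian :: "('n::finite \<Rightarrow> 'n \<Rightarrow> bool) \<Rightarrow> real^'n^'n" where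
  "signless_laplacian E = deg_matrix E + adj_matrix E"

text \<open>q(G): the largest eigenvalue of Q(G) (Q is real symmetric, so all eigenvalues are real).\<close>
definition signless_spectral_radius :: "('n::finite \<Rightarrow> 'n \<Rightarrow> bool) \<Rightarrow> real" where
  "signless_spectral_radius E =
     Max {l. \<exists>x. x \<noteq> 0 \<and> signless_laplacian E *v x = l *\<^sub>R x}"

definition contains_star :: "('n::finite \<Rightarrow> 'n \<Rightarrow> bool) \<Rightarrow> nat \<Rightarrow> bool" where
  "contains_star E t \<longleftrightarrow> (\<exists>u S. u \<notin> S \<and> card S = t \<and> (\<forall>v\<in>S. E u v))"

end

theory Submission
  imports Defs
begin


lemma sym_inner:
  fixes A :: "real^'n^'n"
  assumes "transpose A = A"
  shows "(A *v x) \<bullet> y = x \<bullet> (A *v y)"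
  by (metis assms dot_lmul_matrix vector_transpose_matrix)

lemma eig_finite:
  fixes A :: "real^'n^'n"
  assumes sym: "transpose A = A"
  shows "finite {l. \<exists>x. x \<noteq> 0 \<and> A *v x = l *\<^sub>R x}" (is "finite ?S")
proof -
  define f where "f l = (SOME x. x \<noteq> 0 \<and> A *v x = l *\<^sub>R x)" for l
  have f: "f l \<noteq> 0 \<and> A *v f l = l *\<^sub>R f l" if "l \<in> ?S" for l
    using that unfolding f_def
    by (simp add: someI_ex[of "\<lambda>x. x \<noteq> 0 \<and> A *v x = l *\<^sub>R x"])
  have inj: "inj_on f ?S"
  proof (rule inj_onI)
    fix a b assume a: "a \<in> ?S" and b: "b \<in> ?S" and e: "f a = f b"
    have "a *\<^sub>R f a = b *\<^sub>R f a" using f[OF a] f[OF b] e by metis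
    then show "a = b" using f[OF a] by (simp add: scaleR_cancel_right)
  qed
  have H: "orthogonal (f a) (f b)" if a: "a \<in> ?S" and b: "b \<in> ?S" and "a \<noteq> b" for a b
  proof -
    have "(A *v f a) \<bullet> f b = f a \<bullet> (A *v f b)" by (rule sym_inner[OF sym])
    hence "a * (f a \<bullet> f b) = b * (f a \<bullet> f b)" using f[OF a] f[OF b] by simp
    thus "orthogonal (f a) (f b)" using \<open>a \<noteq> b\<close> unfolding orthogonal_def by simp
  qed
  have orth: "pairwise orthogonal (f ` ?S)"
    unfolding pairwise_def using H by blast
  have "0 \<notin> f ` ?S"
  proof
    assume "0 \<in> f ` ?S"
    then obtain l where l: "l \<in> ?S" "f l = 0" by (metis (no_types, lifting) imageE)
    show False using f[OF l(1)] l(2) by simp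
  qed
  hence "independent (f ` ?S)" using orth pairwise_orthogonal_independent by blast
  hence "finite (f ` ?S)" by (rule finiteI_independent)
  thus ?thesis using inj finite_imageD by blast
qed

lemma psd_zero:
  fixes B :: "real^'n^'n"
  assumes sym: "transpose B = B" and psd: "\<And>y. y \<bullet> (B *v y) \<ge> 0" and z: "x \<bullet> (B *v x) = 0"
  shows "B *v x = 0"
proof -
  have c0: "y \<bullet> (B *v x) = 0" for y
  proof (rule ccontr)
    let ?c = "y \<bullet> (B *v x)" and ?d = "y \<bullet> (B *v y)"
    assume c: "?c \<noteq> 0"
    define t where "t = - ?c / (?d + 1)"
    have d0: "?d \<ge> 0" by (rule psd)
    have "0 \<le> (x + t *\<^sub>R y) \<bullet> (B *v (x + t *\<^sub>R y))" by (rule psd)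
    also have "\<dots> = x \<bullet> (B *v x) + t * (x \<bullet> (B *v y)) + t * ?c + t * t * ?d"
      by (simp add: matrix_vector_right_distrib inner_add_left inner_add_right
          matrix_vector_mult_scaleR algebra_simps)
    also have "x \<bullet> (B *v y) = ?c" using sym_inner[OF sym, of x y] by (simp add: inner_commute)
    finally have "0 \<le> 2 * t * ?c + t * t * ?d" using z by simp
    also have "2 * t * ?c + t * t * ?d = ?c * ?c * (?d / ((?d+1)*(?d+1)) - 2 / (?d+1))"
      using d0 by (simp add: t_def field_simps power2_eq_square)
    also have "\<dots> < 0"
    proof -
      have "?d / ((?d+1)*(?d+1)) \<le> 1 / (?d+1)" using d0 by (simp add: divide_simps)
      also have "\<dots> < 2 / (?d+1)" using d0 by (simp add: divide_simps)
      finally have "?d / ((?d+1)*(?d+1)) < 2 / (?d+1)" .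
      moreover have "?c * ?c > 0" using c by (auto simp: zero_less_mult_iff linorder_neq_iff)
      ultimately show ?thesis by (simp add: mult_pos_neg)
    qed
    finally show False by simp
  qed
  show ?thesis using c0[of "B *v x"] by simp
qed

lemma eig_nonempty:
  fixes A :: "real^'n^'n"
  assumes sym: "transpose A = A"
  shows "\<exists>l x. x \<noteq> 0 \<and> A *v x = l *\<^sub>R x"
proof -
  let ?R = "\<lambda>x. x \<bullet> (A *v x)"
  have cont: "continuous_on (sphere 0 1) ?R"
    by (intro continuous_intros linear_continuous_on bounded_linear_intros matrix_vector_mul_linear)
  have ne: "sphere (0::real^'n) 1 \<noteq> {}"
    using norm_axis_1[of undefined] by (metis mem_sphere_0 empty_iff)
  obtain x where x: "x \<in> sphere 0 1" and mx: "\<And>y. y \<in> sphere 0 1 \<Longrightarrow> ?R y \<le> ?R x"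
    using continuous_attains_sup[OF compact_sphere ne cont] by blast
  define \<mu> where "\<mu> = ?R x"
  define B where "B = \<mu> *\<^sub>R mat 1 - A"
  have Bv: "B *v y = \<mu> *\<^sub>R y - A *v y" for y
  proof -
    have "(\<mu> *\<^sub>R mat 1) *v y = \<mu> *\<^sub>R (mat 1 *v y)" by (rule scaleR_matrix_vector_assoc[symmetric])
    thus ?thesis by (simp add: B_def matrix_vector_mult_diff_rdistrib)
  qed
  have symB: "transpose B = B"
  proof -
    have symc: "A$i$j = A$j$i" for i j
      using arg_cong[OF sym, of "\<lambda>M. M$i$j"] by (simp add: transpose_def)
    show ?thesis by (simp add: B_def transpose_def vec_eq_iff mat_def symc)
  qed
  have psd: "y \<bullet> (B *v y) \<ge> 0" for y
  proof (cases "y = 0")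
    case True thus ?thesis by simp
  next
    case False
    let ?u = "(1 / norm y) *\<^sub>R y"
    have "?u \<in> sphere 0 1" using False by simp
    hence "?R ?u \<le> \<mu>" using mx unfolding \<mu>_def by blast
    hence "(1/norm y)^2 * ?R y \<le> \<mu>"
      by (simp add: matrix_vector_mult_scaleR power2_eq_square)
    hence "?R y \<le> \<mu> * (norm y)^2" using False
      by (simp add: field_simps)
    thus ?thesis by (simp add: Bv inner_diff_right power2_norm_eq_inner)
  qed
  have "x \<bullet> (B *v x) = 0"
    using x by (simp add: Bv inner_diff_right \<mu>_def power2_norm_eq_inner[symmetric])
  hence "B *v x = 0" by (rule psd_zero[OF symB psd])
  hence "A *v x = \<mu> *\<^sub>R x" by (simp add: Bv)
  moreover have "x \<noteq> 0" using x by auto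
  ultimately show ?thesis by blast
qed



lemma nbr_finite: "finite {v. E u v}" for E :: "'n::finite \<Rightarrow> 'n \<Rightarrow> bool"
  by simp

lemma edges_finite: "finite (edges E)"
  by (rule finite_subset[of _ "UNIV"]) auto

lemma edge_card2:
  assumes "simple_graph E" "e \<in> edges E"
  shows "card e = 2"
  using assms unfolding simple_graph_def edges_def by (auto simp: card_insert_if)

lemma inc_card:
  assumes sg: "simple_graph E"
  shows "card {e \<in> edges E. w \<in> e} = degree E w"
proof -
  have "bij_betw (\<lambda>u. {w, u}) {u. E w u} {e \<in> edges E. w \<in> e}"
  proof (rule bij_betwI')
    fix x y assume "x \<in> {u. E w u}" "y \<in> {u. E w u}"
    then show "({w, x} = {w, y}) = (x = y)" using sg unfolding simple_graph_def
      by (metis doubleton_eq_iff mem_Collect_eq)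
  next
    fix x assume "x \<in> {u. E w u}"
    then show "{w, x} \<in> {e \<in> edges E. w \<in> e}" unfolding edges_def by auto
  next
    fix e assume "e \<in> {e \<in> edges E. w \<in> e}"
    then obtain a b where e: "e = {a, b}" "E a b" "w \<in> e" unfolding edges_def by auto
    show "\<exists>x\<in>{u. E w u}. e = {w, x}"
    proof (cases "w = a")
      case True thus ?thesis using e by auto
    next
      case False
      hence "w = b" using e by auto
      thus ?thesis using e sg unfolding simple_graph_def by auto
    qed
  qed
  thus ?thesis unfolding degree_def by (simp add: bij_betw_same_card)
qed

lemma deg_sum_edges:
  assumes sg: "simple_graph E"
  shows "(\<Sum>w\<in>T. degree E w) = (\<Sum>e\<in>edges E. card (e \<inter> T))"
proof -
  have "(\<Sum>w\<in>T. degree E w) = (\<Sum>w\<in>T. \<Sum>e\<in>edges E. if w \<in> e then 1 else 0)"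
    by (simp add: inc_card[OF sg, symmetric] sum.If_cases edges_finite Int_def)
  also have "\<dots> = (\<Sum>e\<in>edges E. \<Sum>w\<in>T. if w \<in> e then 1 else 0)"
    by (rule sum.swap)
  also have "\<dots> = (\<Sum>e\<in>edges E. card (e \<inter> T))"
    by (simp add: sum.If_cases Int_commute)
  finally show ?thesis .
qed

lemma S_le1:
  assumes sg: "simple_graph E"
  shows "(\<Sum>w\<in>{u. E v u}. degree E w) + degree E v \<le> 2 * card (edges E)"
proof -
  let ?N = "{u. E v u}"
  have dv: "degree E v = (\<Sum>e\<in>edges E. if v \<in> e then 1 else 0)"
    by (simp add: inc_card[OF sg, symmetric] sum.If_cases edges_finite Int_def)
  have pw: "card (e \<inter> ?N) + (if v \<in> e then 1 else 0) \<le> (2::nat)" if e: "e \<in> edges E" for e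
  proof -
    obtain a b where ab: "e = {a, b}" "E a b" using e unfolding edges_def by auto
    show ?thesis
    proof (cases "v \<in> e")
      case True
      have irr: "\<not> E v v" using sg unfolding simple_graph_def by blast
      obtain c where "e \<inter> ?N \<subseteq> {c}"
      proof (cases "v = a")
        case True
        hence "e \<inter> ?N \<subseteq> {b}" using ab irr by auto
        thus ?thesis using that by blast
      next
        case False
        hence "v = b" using \<open>v \<in> e\<close> ab by auto
        hence "e \<inter> ?N \<subseteq> {a}" using ab irr by auto
        thus ?thesis using that by blast
      qed
      hence "card (e \<inter> ?N) \<le> card {c}" by (intro card_mono) auto
      hence "card (e \<inter> ?N) \<le> 1" by simp
      thus ?thesis using True by simp
    next
      case False
      have "card (e \<inter> ?N) \<le> card e" using ab by (intro card_mono) auto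
      thus ?thesis using False edge_card2[OF sg e] by simp
    qed
  qed
  have "(\<Sum>w\<in>?N. degree E w) + degree E v = (\<Sum>e\<in>edges E. card (e \<inter> ?N) + (if v \<in> e then 1 else 0))"
    by (simp add: deg_sum_edges[OF sg] dv sum.distrib)
  also have "\<dots> \<le> (\<Sum>e\<in>edges E. 2)" by (rule sum_mono) (rule pw)
  also have "\<dots> = 2 * card (edges E)" by simp
  finally show ?thesis .
qed

lemma S_le2:
  assumes sg: "simple_graph E" and c2: "card {u. E v u} = 2"
  shows "(\<Sum>w\<in>{u. E v u}. degree E w) \<le> card (edges E) + 1"
proof -
  let ?N = "{u. E v u}"
  have pw: "card (e \<inter> ?N) \<le> 1 + (if e = ?N then 1 else (0::nat))" if e: "e \<in> edges E" for e
  proof (cases "e = ?N")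
    case True
    thus ?thesis using c2 by simp
  next
    case False
    have ce: "card e = 2" by (rule edge_card2[OF sg e])
    have fe: "finite e" using ce card_ge_0_finite by fastforce
    show ?thesis
    proof (rule ccontr)
      assume "\<not> ?thesis"
      hence ge: "card (e \<inter> ?N) \<ge> 2" using False by simp
      have "e \<inter> ?N = e"
        by (rule card_subset_eq[OF fe]) (use ge ce card_mono[OF fe, of "e \<inter> ?N"] in auto)
      moreover have "e \<inter> ?N = ?N"
        by (rule card_subset_eq) (use ge c2 card_mono[of ?N "e \<inter> ?N"] in auto)
      ultimately show False using False by simp
    qed
  qed
  have "(\<Sum>w\<in>?N. degree E w) = (\<Sum>e\<in>edges E. card (e \<inter> ?N))"
    by (rule deg_sum_edges[OF sg])
  also have "\<dots> \<le> (\<Sum>e\<in>edges E. 1 + (if e = ?N then 1 else (0::nat)))" by (rule sum_mono) (rule pw)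
  also have "\<dots> = card (edges E) + (\<Sum>e\<in>edges E. if e = ?N then 1 else (0::nat))"
    by (simp only: sum.distrib) simp
  also have "\<dots> = card (edges E) + (if ?N \<in> edges E then 1 else 0)"
    by (simp only: sum.delta[OF edges_finite])
  also have "\<dots> \<le> card (edges E) + 1" by simp
  finally show ?thesis .
qed

lemma Qv:
  "(signless_laplacian E *v x)$v = real (degree E v) * x$v + (\<Sum>w\<in>{u. E v u}. x$w)"
proof -
  let ?d = "real (degree E v)"
  have "(signless_laplacian E *v x)$v = (\<Sum>j\<in>UNIV. ((if v = j then ?d else 0) + (if E v j then 1 else 0)) * x$j)"
    unfolding signless_laplacian_def deg_matrix_def adj_matrix_def matrix_vector_mult_def by simp
  also have "\<dots> = (\<Sum>j\<in>UNIV. (if v = j then ?d * x$j else 0) + (if E v j then x$j else 0))"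
    by (rule sum.cong) (auto simp: distrib_right)
  also have "\<dots> = (\<Sum>j\<in>UNIV. (if v = j then ?d * x$j else 0)) + (\<Sum>j\<in>UNIV. (if E v j then x$j else 0))"
    by (rule sum.distrib)
  also have "(\<Sum>j\<in>UNIV. (if v = j then ?d * x$j else 0)) = ?d * x$v"
    by (simp add: sum.delta)
  also have "(\<Sum>j\<in>UNIV. (if E v j then x$j else 0)) = (\<Sum>w\<in>{u. E v u}. x$w)"
    by (simp add: sum.If_cases)
  finally show ?thesis .
qed

lemma key_arith:
  fixes d S m k :: nat
  assumes d0: "d > 0" and dD: "d \<le> m - k - 1" and m7: "m \<ge> 7 * k + 25"
    and S1: "S + d \<le> 2 * m" and S2: "S \<le> d * (m - k - 1)" and S3: "d = 2 \<Longrightarrow> S \<le> m + 1"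
  shows "real d ^ 2 + real S < (real m - real k + 1) * real d"
proof -
  have mk: "real (m - k - 1) = real m - real k - 1" using m7 by simp
  have dD': "real d \<le> real m - real k - 1" using dD mk by linarith
  have S1': "real S + real d \<le> 2 * real m" using S1 by linarith
  have S2': "real S \<le> real d * (real m - real k - 1)" using S2 mk
    by (metis of_nat_le_iff of_nat_mult)
  consider "d = 1" | "d = 2" | "d \<ge> 3" using d0 by linarith
  then show ?thesis
  proof cases
    case 1
    thus ?thesis using S2' m7 by simp
  next
    case 2
    have "real S \<le> real m + 1" using S3[OF 2] by linarith
    thus ?thesis using 2 m7 by (simp add: power2_eq_square)
  next
    case 3
    have "(real d - 3) * (real d - (real m - real k - 1)) \<le> 0"
      by (rule mult_nonneg_nonpos) (use 3 dD' in auto)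
    hence h: "real d * real d - real d * real m + real d * real k + real d - 3 * real d + 3 * real m - 3 * real k - 3 \<le> 0"
      by (simp add: algebra_simps)
    have "real d ^ 2 + real S \<le> real d * real d + 2 * real m - real d"
      using S1' by (simp add: power2_eq_square)
    also have "\<dots> < (real m - real k + 1) * real d"
      using h m7 by (simp add: algebra_simps)
    finally show ?thesis .
  qed
qed

lemma eig_bound:
  fixes E :: "'n::finite \<Rightarrow> 'n \<Rightarrow> bool"
  assumes sg: "simple_graph E"
    and key: "\<And>v. degree E v > 0 \<Longrightarrow>
      real (degree E v) ^ 2 + real (\<Sum>w\<in>{u. E v u}. degree E w) < c * real (degree E v)"
    and c0: "c > 0" and xne: "x \<noteq> 0" and ev: "signless_laplacian E *v x = l *\<^sub>R x"
  shows "l < c"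
proof -
  let ?d = "\<lambda>u. real (degree E u)"
  let ?V = "{u. degree E u > 0}"
  have eq: "l * x$u = ?d u * x$u + (\<Sum>w\<in>{w. E u w}. x$w)" for u
    using arg_cong[OF ev, of "\<lambda>y. y$u"] Qv[of E x u] by simp
  show ?thesis
  proof (cases "\<exists>u\<in>?V. x$u \<noteq> 0")
    case True
    then obtain u0 where u0: "u0 \<in> ?V" "x$u0 \<noteq> 0" by blast
    let ?g = "\<lambda>u. \<bar>x$u\<bar> / ?d u"
    have finV: "finite (?g ` ?V)" by simp
    have neV: "?g ` ?V \<noteq> {}" using u0 by blast
    obtain v where v: "v \<in> ?V" "?g v = Max (?g ` ?V)"
      using Max_in[OF finV neV] by (metis (no_types, lifting) imageE)
    have gmax: "?g u \<le> ?g v" if "u \<in> ?V" for u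
      using Max_ge[OF finV] that v(2) by simp
    have dv: "?d v > 0" using v(1) by simp
    have "?g u0 > 0" using u0 by simp
    hence gv: "?g v > 0" using gmax[OF u0(1)] by linarith
    hence xv: "\<bar>x$v\<bar> > 0" using dv by (simp add: zero_less_divide_iff)
    have nb: "\<bar>x$w\<bar> \<le> ?d w * ?g v" if "E v w" for w
    proof -
      have "E w v" using that sg unfolding simple_graph_def by blast
      hence "{u. E w u} \<noteq> {}" by blast
      hence "degree E w > 0" unfolding degree_def by (simp add: card_gt_0_iff)
      hence "?g w \<le> ?g v" and "?d w > 0" using gmax by auto
      thus ?thesis by (simp add: divide_le_eq mult.commute)
    qed
    let ?S = "real (\<Sum>w\<in>{u. E v u}. degree E w)"
    have "(l - ?d v) * \<bar>x$v\<bar> \<le> \<bar>(l - ?d v) * x$v\<bar>"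
      unfolding abs_mult by (rule mult_right_mono) auto
    also have "(l - ?d v) * x$v = (\<Sum>w\<in>{w. E v w}. x$w)" using eq[of v] by (simp add: algebra_simps)
    also have "\<bar>\<dots>\<bar> \<le> (\<Sum>w\<in>{w. E v w}. \<bar>x$w\<bar>)" by (rule sum_abs)
    also have "\<dots> \<le> (\<Sum>w\<in>{w. E v w}. ?d w * ?g v)" by (rule sum_mono) (use nb in auto)
    also have "\<dots> = ?S * ?g v" by (simp only: of_nat_sum sum_distrib_right)
    finally have "(l - ?d v) * \<bar>x$v\<bar> \<le> ?S * (\<bar>x$v\<bar> / ?d v)" .
    hence "(l - ?d v) * ?d v * \<bar>x$v\<bar> \<le> ?S * \<bar>x$v\<bar>" using dv
      by (simp add: field_simps)
    hence "(l - ?d v) * ?d v \<le> ?S" using xv by simp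
    moreover have "?d v ^ 2 + ?S < c * ?d v" using key v(1) by simp
    ultimately have "l * ?d v < c * ?d v" by (simp add: algebra_simps power2_eq_square)
    thus ?thesis using dv by simp
  next
    case False
    obtain v where xv: "x$v \<noteq> 0" using xne by (metis vec_eq_iff zero_index)
    hence "degree E v = 0" using False by auto
    hence "{u. E v u} = {}" unfolding degree_def by simp
    hence "l * x$v = 0" using eq[of v] \<open>degree E v = 0\<close> by simp
    hence "l = 0" using xv by simp
    thus ?thesis using c0 by simp
  qed
qed


theorem theorem1p6:
  fixes E :: "'n::finite \<Rightarrow> 'n \<Rightarrow> bool" and k m :: nat
  assumes "simple_graph E"
    and "m = card (edges E)"
    and "real m \<ge> real k ^ 2 / 2 + 6 * real k + 3"
    and "m \<ge> 7 * k + 25"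
    and "signless_spectral_radius E \<ge> real m - real k + 1"
  shows "contains_star E (m - k)"
proof (rule ccontr)
  assume ns: "\<not> contains_star E (m - k)"
  note sg = assms(1)
  have irr: "\<not> E u u" for u using sg unfolding simple_graph_def by blast
  have symE: "E i j = E j i" for i j using sg unfolding simple_graph_def by blast
  have degb: "degree E u < m - k" for u
  proof (rule ccontr)
    assume "\<not> degree E u < m - k"
    hence "m - k \<le> card {v. E u v}" unfolding degree_def by simp
    then obtain S where S: "S \<subseteq> {v. E u v}" "card S = m - k"
      using obtain_subset_with_card_n by metis
    have "u \<notin> S" using S(1) irr by blast
    hence "contains_star E (m - k)" unfolding contains_star_def using S by blast
    thus False using ns by simp
  qed
  have db1: "degree E u \<le> m - k - 1" for u using degb[of u] by arith
  let ?c = "real m - real k + 1"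
  have c0: "?c > 0" using assms(4) by simp
  have key: "real (degree E v) ^ 2 + real (\<Sum>w\<in>{u. E v u}. degree E w) < ?c * real (degree E v)"
    if "degree E v > 0" for v
  proof (rule key_arith)
    show "degree E v > 0" by (rule that)
    show "degree E v \<le> m - k - 1" using degb[of v] by simp
    show "m \<ge> 7 * k + 25" by (rule assms(4))
    show "(\<Sum>w\<in>{u. E v u}. degree E w) + degree E v \<le> 2 * m"
      using S_le1[OF sg, of v] assms(2) by simp
    have "(\<Sum>w\<in>{u. E v u}. degree E w) \<le> of_nat (card {u. E v u}) * (m - k - 1)"
      by (rule sum_bounded_above) (use db1 in blast)
    hence "(\<Sum>w\<in>{u. E v u}. degree E w) \<le> card {u. E v u} * (m - k - 1)" by simp
    thus "(\<Sum>w\<in>{u. E v u}. degree E w) \<le> degree E v * (m - k - 1)"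
      unfolding degree_def by simp
    show "(\<Sum>w\<in>{u. E v u}. degree E w) \<le> m + 1" if "degree E v = 2"
      using S_le2[OF sg, of v] that assms(2) unfolding degree_def by simp
  qed
  let ?Q = "signless_laplacian E"
  have symQ: "transpose ?Q = ?Q"
    by (simp add: signless_laplacian_def deg_matrix_def adj_matrix_def transpose_def vec_eq_iff symE)
  let ?L = "{l. \<exists>x. x \<noteq> 0 \<and> ?Q *v x = l *\<^sub>R x}"
  have finL: "finite ?L" by (rule eig_finite[OF symQ])
  have neL: "?L \<noteq> {}" using eig_nonempty[OF symQ] by blast
  have allL: "l < ?c" if "l \<in> ?L" for l
    using that eig_bound[OF sg key c0] by blast
  have "Max ?L \<in> ?L" by (rule Max_in[OF finL neL])
  hence "Max ?L < ?c" by (rule allL)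
  thus False using assms(5) unfolding signless_spectral_radius_def by simp
qed

end
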